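(* Let $V$ be a finite-dimensional real vector space, $p\ge2$, and $(P,\Omega)$ a linear Dirac structure of order $p$ on $V$ relative to $\mathbb R$. Let $L=\{(v,\omega)\in V\times\Lambda^{p-1}V^*: v\in P,\ i_v\Omega=\omega|_{\Lambda^{p-1}P}\}$ and $L^\perp=\{(Z,\eta)\in\Lambda^{p-1}V\times V^*: Z\in\Lambda^{p-1}P,\ i_Z\Omega=\eta|_P\}$, and let $\pi^*(L)\subset\Lambda^{p-1}V^*$ and $\pi^*(L^\perp)\subset V^*$ be the projections onto the second components. Then $\Lambda^{p-1}\big(\pi^*(L^\perp)\big)\subset\pi^*(L)$.
   Context: A linear Dirac structure of order $p$ on $V$ relative to $\mathbb R$ is a pair $(P,\Omega)$ where $P\subset V$ is a subspace and $\Omega\in\Lambda^pP^*$, satisfying condition (H): for all $Z_1,\dots,Z_{p-1}\in\Lambda^{p-1}P$ there exists $v\in P$ with $(i_{Z_1}\Omega)\wedge\dots\wedge(i_{Z_{p-1}}\Omega)=i_v\Omega$. Here $(i_v\Omega)(Z)=\Omega(v\wedge Z)$ for $v\in P$, $Z\in\Lambda^{p-1}P$, and $(i_Z\Omega)(w)=\Omega(Z\wedge w)$ for $w\in P$. *)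

theory Defs
  imports "HOL-Analysis.Analysis"
begin

text \<open>
  V is a finite-dimensional real vector space, modelled as a type
  'v of class euclidean_space (the inner product is never used).
  A k-form on a subspace P (an element of the k-th exterior power of the dual of P)
  is represented as a function on lists of vectors, which on lists of length k with
  entries in P is multilinear and alternating, and which is 0 on all other lists
  (so that the representation is canonical).
\<close>

definition multilinear_on :: "'v::real_vector set \<Rightarrow> nat \<Rightarrow> ('v list \<Rightarrow> real) \<Rightarrow> bool" where
  "multilinear_on P k f \<longleftrightarrow>
     (\<forall>xs i u w (a::real) (b::real). length xs = k \<and> set xs \<subseteq> P \<and> i < k \<and> u \<in> P \<and> w \<in> P \<longrightarrow>
        f (xs[i := a *\<^sub>R u + b *\<^sub>R w]) = a * f (xs[i := u]) + b * f (xs[i := w]))"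

definition alternating_on :: "'v set \<Rightarrow> nat \<Rightarrow> ('v list \<Rightarrow> real) \<Rightarrow> bool" where
  "alternating_on P k f \<longleftrightarrow>
     (\<forall>xs i j. length xs = k \<and> set xs \<subseteq> P \<and> i < k \<and> j < k \<and> i \<noteq> j \<and> xs ! i = xs ! j
        \<longrightarrow> f xs = 0)"

definition alt_form :: "'v::real_vector set \<Rightarrow> nat \<Rightarrow> ('v list \<Rightarrow> real) \<Rightarrow> bool" where
  "alt_form P k f \<longleftrightarrow> multilinear_on P k f \<and> alternating_on P k f \<and>
     (\<forall>xs. \<not> (length xs = k \<and> set xs \<subseteq> P) \<longrightarrow> f xs = 0)"

text \<open>Elements Z of \<Lambda>^k P (as a subspace of \<Lambda>^k V) are represented as finite formal
  linear combinations of decomposable multivectors z_1 \<and> ... \<and> z_k with z_i \<in> P: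
  a list of pairs (c, [z_1,...,z_k]).\<close>
definition multivec_in :: "'v set \<Rightarrow> nat \<Rightarrow> (real \<times> 'v list) list \<Rightarrow> bool" where
  "multivec_in P k Z \<longleftrightarrow> (\<forall>(c, zs) \<in> set Z. length zs = k \<and> set zs \<subseteq> P)"

definition iZ :: "('v list \<Rightarrow> real) \<Rightarrow> (real \<times> 'v list) list \<Rightarrow> 'v \<Rightarrow> real" where
  "iZ \<Omega> Z w = (\<Sum>(c, zs) \<leftarrow> Z. c * \<Omega> (zs @ [w]))"

definition iv :: "('v list \<Rightarrow> real) \<Rightarrow> 'v \<Rightarrow> 'v list \<Rightarrow> real" where
  "iv \<Omega> v zs = \<Omega> (v # zs)"

text \<open>Wedge product \<eta>_1 \<and> ... \<and> \<eta>_k of 1-forms (determinant convention).\<close>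
definition wedge1 :: "('v \<Rightarrow> real) list \<Rightarrow> 'v list \<Rightarrow> real" where
  "wedge1 etas ws =
     (if length ws = length etas then
        (\<Sum>\<sigma> | \<sigma> permutes {..<length etas}.
           of_int (sign \<sigma>) * (\<Prod>i<length etas. (etas ! i) (ws ! \<sigma> i)))
      else 0)"

text \<open>Linear Dirac structure of order p on V relative to \<real>, condition (H) included.\<close>
definition linear_dirac :: "nat \<Rightarrow> 'v::real_vector set \<Rightarrow> ('v list \<Rightarrow> real) \<Rightarrow> bool" where
  "linear_dirac p P \<Omega> \<longleftrightarrow> subspace P \<and> alt_form P p \<Omega> \<and>
     (\<forall>Zs. length Zs = p - 1 \<and> (\<forall>Z \<in> set Zs. multivec_in P (p - 1) Z) \<longrightarrow>
        (\<exists>v \<in> P. \<forall>ws. length ws = p - 1 \<and> set ws \<subseteq> P \<longrightarrow>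
            wedge1 (map (iZ \<Omega>) Zs) ws = iv \<Omega> v ws))"

definition piL :: "nat \<Rightarrow> 'v::real_vector set \<Rightarrow> ('v list \<Rightarrow> real) \<Rightarrow> ('v list \<Rightarrow> real) set" where
  "piL p P \<Omega> = {\<omega>. alt_form UNIV (p - 1) \<omega> \<and>
      (\<exists>v \<in> P. \<forall>zs. length zs = p - 1 \<and> set zs \<subseteq> P \<longrightarrow> iv \<Omega> v zs = \<omega> zs)}"

definition piLperp :: "nat \<Rightarrow> 'v::real_vector set \<Rightarrow> ('v list \<Rightarrow> real) \<Rightarrow> ('v \<Rightarrow> real) set" where
  "piLperp p P \<Omega> = {\<eta>. linear \<eta> \<and>
      (\<exists>Z. multivec_in P (p - 1) Z \<and> (\<forall>w \<in> P. iZ \<Omega> Z w = \<eta> w))}"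

definition ext_power :: "nat \<Rightarrow> ('v \<Rightarrow> real) set \<Rightarrow> ('v list \<Rightarrow> real) set" where
  "ext_power k W = {\<omega>. \<exists>cs :: (real \<times> ('v \<Rightarrow> real) list) list.
      (\<forall>(c, etas) \<in> set cs. length etas = k \<and> set etas \<subseteq> W) \<and>
      \<omega> = (\<lambda>ws. \<Sum>(c, etas) \<leftarrow> cs. c * wedge1 etas ws)}"

end

theory Submission imports Defs "Jordan_Normal_Form.Determinant" begin

lemma wedge_det:
  assumes "length ws = length etas"
  shows "wedge1 etas ws = det (mat (length etas) (length etas) (\<lambda>(i,j). (etas!i) (ws!j)))"
  using assms unfolding wedge1_def det_def by (simp add: atLeast0LessThan)

lemma wedge_alt:
  assumes "length ws = length etas" "i < length etas" "j < length etas" "i \<noteq> j" "ws!i = ws!j"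
  shows "wedge1 etas ws = 0"
  unfolding wedge_det[OF assms(1)]
  by (rule det_identical_columns[of _ "length etas" i j]) (use assms in \<open>auto simp: col_def\<close>)

lemma wedge_lin:
  assumes lin: "\<forall>e\<in>set etas. linear e" and len: "length xs = length etas" and k: "k < length etas"
  shows "wedge1 etas (xs[k := a *\<^sub>R u + b *\<^sub>R w]) = a * wedge1 etas (xs[k := u]) + b * wedge1 etas (xs[k := w])"
proof -
  let ?n = "length etas"
  have key: "(\<Prod>i<?n. (etas ! i) (xs[k := y] ! \<sigma> i)) =
     (etas ! inv_into UNIV \<sigma> k) y * (\<Prod>i\<in>{..<?n} - {inv_into UNIV \<sigma> k}. (etas ! i) (xs ! \<sigma> i))"
    if s: "\<sigma> permutes {..<?n}" for \<sigma> y
  proof -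
    have jn: "inv_into UNIV \<sigma> k < ?n" using s k by (meson lessThan_iff permutes_inv permutes_in_image)
    have sj: "\<sigma> (inv_into UNIV \<sigma> k) = k" using s by (meson permutes_inverses(1))
    have "(\<Prod>i<?n. (etas ! i) (xs[k := y] ! \<sigma> i)) =
        (etas ! inv_into UNIV \<sigma> k) (xs[k := y] ! \<sigma> (inv_into UNIV \<sigma> k)) * (\<Prod>i\<in>{..<?n} - {inv_into UNIV \<sigma> k}. (etas ! i) (xs[k := y] ! \<sigma> i))"
      using jn by (simp add: prod.remove)
    also have "(\<Prod>i\<in>{..<?n} - {inv_into UNIV \<sigma> k}. (etas ! i) (xs[k := y] ! \<sigma> i)) = (\<Prod>i\<in>{..<?n} - {inv_into UNIV \<sigma> k}. (etas ! i) (xs ! \<sigma> i))"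
    proof (rule prod.cong)
      fix i assume "i \<in> {..<?n} - {inv_into UNIV \<sigma> k}"
      then have "\<sigma> i \<noteq> k" using s by (metis DiffD2 insertI1 permutes_inverses(2))
      then show "(etas ! i) (xs[k := y] ! \<sigma> i) = (etas ! i) (xs ! \<sigma> i)" by simp
    qed simp
    finally show ?thesis using sj len k by simp
  qed
  have lj: "linear (etas ! inv_into UNIV \<sigma> k)" if s: "\<sigma> permutes {..<?n}" for \<sigma>
  proof -
    have "inv_into UNIV \<sigma> k < ?n" using s k by (meson lessThan_iff permutes_inv permutes_in_image)
    then show ?thesis using lin by simp
  qed
  have each: "real_of_int (sign \<sigma>) * (\<Prod>i<?n. (etas ! i) (xs[k := a *\<^sub>R u + b *\<^sub>R w] ! \<sigma> i)) =
     a * (real_of_int (sign \<sigma>) * (\<Prod>i<?n. (etas ! i) (xs[k := u] ! \<sigma> i))) +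
     b * (real_of_int (sign \<sigma>) * (\<Prod>i<?n. (etas ! i) (xs[k := w] ! \<sigma> i)))"
    if s: "\<sigma> permutes {..<?n}" for \<sigma>
    unfolding key[OF s] using lj[OF s]
    by (simp add: linear_add linear_scale algebra_simps)
  have "(\<Sum>\<sigma> | \<sigma> permutes {..<?n}. real_of_int (sign \<sigma>) * (\<Prod>i<?n. (etas ! i) (xs[k := a *\<^sub>R u + b *\<^sub>R w] ! \<sigma> i))) =
     (\<Sum>\<sigma> | \<sigma> permutes {..<?n}. a * (real_of_int (sign \<sigma>) * (\<Prod>i<?n. (etas ! i) (xs[k := u] ! \<sigma> i))) +
     b * (real_of_int (sign \<sigma>) * (\<Prod>i<?n. (etas ! i) (xs[k := w] ! \<sigma> i))))"
    by (rule sum.cong) (auto simp: each)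
  then show ?thesis
    using len k unfolding wedge1_def
    by (simp add: sum_distrib_left sum.distrib)
qed

lemma sum_alt_form:
  fixes cs :: "(real \<times> ('a::real_vector \<Rightarrow> real) list) list"
  assumes "\<forall>(c, etas) \<in> set cs. length etas = k \<and> (\<forall>e\<in>set etas. linear e)"
  shows "alt_form UNIV k (\<lambda>ws. \<Sum>(c, etas) \<leftarrow> cs. c * wedge1 etas ws)"
  using assms
proof (induction cs)
  case Nil
  then show ?case by (simp add: alt_form_def multilinear_on_def alternating_on_def)
next
  case (Cons ce cs)
  obtain c etas where ce: "ce = (c, etas)" by force
  have l: "length etas = k" and lin: "\<forall>e\<in>set etas. linear e" using Cons.prems ce by auto
  have IH: "alt_form UNIV k (\<lambda>ws. \<Sum>(c, etas) \<leftarrow> cs. c * wedge1 etas ws)" using Cons by auto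
  show ?case
    unfolding alt_form_def multilinear_on_def alternating_on_def
  proof (intro conjI allI impI)
    fix xs :: "'a list" and i :: nat and u w :: 'a and a b :: real
    assume h: "length xs = k \<and> set xs \<subseteq> UNIV \<and> i < k \<and> u \<in> UNIV \<and> w \<in> UNIV"
    have "wedge1 etas (xs[i := a *\<^sub>R u + b *\<^sub>R w]) = a * wedge1 etas (xs[i := u]) + b * wedge1 etas (xs[i := w])"
      using wedge_lin[OF lin, of xs i a u b w] h l by simp
    moreover have "(\<Sum>(c, etas) \<leftarrow> cs. c * wedge1 etas (xs[i := a *\<^sub>R u + b *\<^sub>R w])) =
       a * (\<Sum>(c, etas) \<leftarrow> cs. c * wedge1 etas (xs[i := u])) + b * (\<Sum>(c, etas) \<leftarrow> cs. c * wedge1 etas (xs[i := w]))"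
      using IH h unfolding alt_form_def multilinear_on_def by blast
    ultimately show "(\<Sum>(c, etas) \<leftarrow> ce # cs. c * wedge1 etas (xs[i := a *\<^sub>R u + b *\<^sub>R w])) =
       a * (\<Sum>(c, etas) \<leftarrow> ce # cs. c * wedge1 etas (xs[i := u])) + b * (\<Sum>(c, etas) \<leftarrow> ce # cs. c * wedge1 etas (xs[i := w]))"
      using ce by (simp add: algebra_simps)
  next
    fix xs :: "'a list" and i j :: nat
    assume h: "length xs = k \<and> set xs \<subseteq> UNIV \<and> i < k \<and> j < k \<and> i \<noteq> j \<and> xs ! i = xs ! j"
    have "wedge1 etas xs = 0" using wedge_alt[of xs etas i j] h l by simp
    moreover have "(\<Sum>(c, etas) \<leftarrow> cs. c * wedge1 etas xs) = 0"
      using IH h unfolding alt_form_def alternating_on_def by blast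
    ultimately show "(\<Sum>(c, etas) \<leftarrow> ce # cs. c * wedge1 etas xs) = 0" using ce by simp
  next
    fix xs :: "'a list"
    assume h: "\<not> (length xs = k \<and> set xs \<subseteq> UNIV)"
    have "wedge1 etas xs = 0" using h l by (simp add: wedge1_def)
    moreover have "(\<Sum>(c, etas) \<leftarrow> cs. c * wedge1 etas xs) = 0"
      using IH h unfolding alt_form_def by blast
    ultimately show "(\<Sum>(c, etas) \<leftarrow> ce # cs. c * wedge1 etas xs) = 0" using ce by simp
  qed
qed

lemma wedge_cong:
  assumes "length fs = length gs" "\<And>i. i < length gs \<Longrightarrow> \<forall>w\<in>P. (fs!i) w = (gs!i) w" "set ws \<subseteq> P"
  shows "wedge1 fs ws = wedge1 gs ws"
proof (cases "length ws = length gs")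
  case True
  have "(\<Prod>i<length gs. (fs ! i) (ws ! \<sigma> i)) = (\<Prod>i<length gs. (gs ! i) (ws ! \<sigma> i))"
    if s: "\<sigma> permutes {..<length gs}" for \<sigma>
  proof (rule prod.cong)
    fix i assume i: "i \<in> {..<length gs}"
    then have "\<sigma> i < length ws" using s True by (metis lessThan_iff permutes_in_image)
    then have "ws ! \<sigma> i \<in> P" using assms(3) nth_mem by blast
    then show "(fs ! i) (ws ! \<sigma> i) = (gs ! i) (ws ! \<sigma> i)" using assms(2) i by auto
  qed simp
  then show ?thesis using assms(1) unfolding wedge1_def by (auto intro!: sum.cong)
next
  case False
  then show ?thesis using assms(1) unfolding wedge1_def by simp
qed

theorem lemma4p4:
  fixes P :: "'v::euclidean_space set"
    and \<Omega> :: "'v list \<Rightarrow> real"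
    and p :: nat
  assumes "p \<ge> 2"
    and "linear_dirac p P \<Omega>"
  shows "ext_power (p - 1) (piLperp p P \<Omega>) \<subseteq> piL p P \<Omega>"
proof
  fix \<omega> assume "\<omega> \<in> ext_power (p - 1) (piLperp p P \<Omega>)"
  then obtain cs where cs: "\<forall>(c, etas) \<in> set cs. length etas = p - 1 \<and> set etas \<subseteq> piLperp p P \<Omega>"
    and om: "\<omega> = (\<lambda>ws. \<Sum>(c, etas) \<leftarrow> cs. c * wedge1 etas ws)"
    unfolding ext_power_def by blast
  have sub: "subspace P" and af: "alt_form P p \<Omega>"
    and H: "\<And>Zs. length Zs = p - 1 \<Longrightarrow> (\<forall>Z \<in> set Zs. multivec_in P (p - 1) Z) \<Longrightarrow>
        (\<exists>v \<in> P. \<forall>ws. length ws = p - 1 \<and> set ws \<subseteq> P \<longrightarrow>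
            wedge1 (map (iZ \<Omega>) Zs) ws = iv \<Omega> v ws)"
    using assms(2) unfolding linear_dirac_def by blast+
  have ml: "\<Omega> ((v1 # zs)[0 := a *\<^sub>R v1 + b *\<^sub>R v2]) = a * \<Omega> ((v1 # zs)[0 := v1]) + b * \<Omega> ((v1 # zs)[0 := v2])"
    if "v1 \<in> P" "v2 \<in> P" "set zs \<subseteq> P" "length zs = p - 1" for v1 v2 zs a b
  proof -
    have "length (v1 # zs) = p" "set (v1 # zs) \<subseteq> P" "0 < p" using that assms(1) by auto
    then show ?thesis using af that(1,2) unfolding alt_form_def multilinear_on_def by blast
  qed
  have ml2: "\<Omega> ((a *\<^sub>R v1 + b *\<^sub>R v2) # zs) = a * \<Omega> (v1 # zs) + b * \<Omega> (v2 # zs)"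
    if "v1 \<in> P" "v2 \<in> P" "set zs \<subseteq> P" "length zs = p - 1" for v1 v2 zs a b
    using ml[OF that, of a b] by simp
  have single: "\<exists>v\<in>P. \<forall>zs. length zs = p - 1 \<and> set zs \<subseteq> P \<longrightarrow> \<Omega> (v # zs) = wedge1 etas zs"
    if l: "length etas = p - 1" and e: "set etas \<subseteq> piLperp p P \<Omega>" for etas
  proof -
    define Zf where "Zf eta = (SOME Z. multivec_in P (p - 1) Z \<and> (\<forall>w \<in> P. iZ \<Omega> Z w = eta w))" for eta
    have Zf: "multivec_in P (p - 1) (Zf eta) \<and> (\<forall>w \<in> P. iZ \<Omega> (Zf eta) w = eta w)" if "eta \<in> set etas" for eta
    proof -
      have "\<exists>Z. multivec_in P (p - 1) Z \<and> (\<forall>w \<in> P. iZ \<Omega> Z w = eta w)"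
        using e that unfolding piLperp_def by blast
      then show ?thesis unfolding Zf_def by (rule someI_ex)
    qed
    obtain v where v: "v \<in> P" and hv: "\<forall>ws. length ws = p - 1 \<and> set ws \<subseteq> P \<longrightarrow>
            wedge1 (map (iZ \<Omega>) (map Zf etas)) ws = iv \<Omega> v ws"
      using H[of "map Zf etas"] l Zf by auto
    show ?thesis
    proof (intro bexI[OF _ v] allI impI)
      fix zs assume z: "length zs = p - 1 \<and> set zs \<subseteq> P"
      have "wedge1 etas zs = wedge1 (map (iZ \<Omega>) (map Zf etas)) zs"
        by (rule wedge_cong[where P=P]) (use z Zf in auto)
      then show "\<Omega> (v # zs) = wedge1 etas zs" using hv z by (simp add: iv_def)
    qed
  qed
  have "\<exists>v\<in>P. \<forall>zs. length zs = p - 1 \<and> set zs \<subseteq> P \<longrightarrow> \<Omega> (v # zs) = (\<Sum>(c, etas) \<leftarrow> cs. c * wedge1 etas zs)"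
    using cs
  proof (induction cs)
    case Nil
    have "0 \<in> P" using sub by (simp add: subspace_0)
    moreover have "\<Omega> (0 # zs) = 0" if "length zs = p - 1 \<and> set zs \<subseteq> P" for zs
      using ml2[of 0 0 zs 0 0] \<open>0 \<in> P\<close> that by simp
    ultimately show ?case by auto
  next
    case (Cons ce cs)
    obtain c etas where ce: "ce = (c, etas)" by force
    obtain v1 where v1: "v1 \<in> P" "\<forall>zs. length zs = p - 1 \<and> set zs \<subseteq> P \<longrightarrow> \<Omega> (v1 # zs) = wedge1 etas zs"
    proof -
      have "length etas = p - 1" "set etas \<subseteq> piLperp p P \<Omega>" using Cons.prems ce by auto
      from single[OF this] show ?thesis using that by blast
    qed
    obtain v2 where v2: "v2 \<in> P" "\<forall>zs. length zs = p - 1 \<and> set zs \<subseteq> P \<longrightarrow> \<Omega> (v2 # zs) = (\<Sum>(c, etas) \<leftarrow> cs. c * wedge1 etas zs)"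
      using Cons by auto
    have vin: "c *\<^sub>R v1 + 1 *\<^sub>R v2 \<in> P" using sub v1 v2 by (simp add: subspace_add subspace_scale)
    show ?case
    proof (intro bexI[OF _ vin] allI impI)
      fix zs assume z: "length zs = p - 1 \<and> set zs \<subseteq> P"
      show "\<Omega> ((c *\<^sub>R v1 + 1 *\<^sub>R v2) # zs) = (\<Sum>(c, etas) \<leftarrow> ce # cs. c * wedge1 etas zs)"
        using ml2[of v1 v2 zs c 1] v1 v2 z ce by simp
    qed
  qed
  moreover have "alt_form UNIV (p - 1) \<omega>"
    unfolding om
  proof (rule sum_alt_form, clarify)
    fix c etas assume "(c, etas) \<in> set cs"
    then show "length etas = p - 1 \<and> (\<forall>e\<in>set etas. linear e)"
      using cs unfolding piLperp_def by blast
  qed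
  ultimately show "\<omega> \<in> piL p P \<Omega>" unfolding piL_def iv_def om by auto
qed

end
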